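(* There is an absolute constant $c>0$ such that for every sufficiently small $\varepsilon>0$ the following holds in the modified instance described in the context: there exists a clustering $\mathcal C^*_1$ of $V$ with cost at most $(1+c\varepsilon)\,\mathrm{opt}$ that does not split any atom of $\mathcal K$ and such that for every $u\in V$ and every $C\in\mathcal C^*_1$ with $K_u\subsetneq C$, we have $w(u,C)>\frac{|C|}{2}+\varepsilon\, w_u$.
   Context: A Correlation Clustering instance consists of a finite vertex set $V$ and a partition $E^+\uplus E^-=\binom V2$ of unordered pairs of distinct vertices into $+$edges and $-$edges; the cost of a clustering (partition) is the number of $+$edges between different parts plus the number of $-$edges inside parts. Every vertex has a $+$ self-loop by convention, so the set $N^+_u$ of $+$neighbours contains $u$. Let $\mathcal C$ be a clustering with cost at most $3$ times optimum. The atoms: with $\beta=0.1$, for every non-singleton $C\in\mathcal C$ mark every $u\in C$ with $|N^+_u\triangle C|>\frac\beta2|C|$ ($\triangle$ = symmetric difference), and if at least $\frac{\beta|C|}3$ vertices of $C$ are marked, mark all of $C$; $\mathcal K$ is obtained from $\mathcal C$ by making every marked vertex a singleton. Modified instance: every pair of distinct vertices lying in a common atom is relabelled as a $+$edge; below, costs and $\mathrm{opt}$ (the minimum cost) refer to this modified instance. For $u\in V$, $K_u$ is the atom containing $u$ and $k_u=|K_u|$. For $u,v\in V$ (possibly equal), $w_{uv}=\frac1{k_uk_v}\sum_{u'\in K_u,v'\in K_v}\mathbf 1[u'v'\text{ is a }+\text{edge or }u'=v']$; for $V'\subseteq V$, $w(u,V')=\sum_{v\in V'}w_{uv}$, and $w_u=w(u,V)$.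 *)

theory Defs
  imports Complex_Main "HOL-Library.Disjoint_Sets"
begin

text \<open>An instance: finite vertex set V and a symmetric relation E giving the +edges
  (pairs of distinct vertices not related by E are -edges).\<close>

definition same_cluster :: "'a set set \<Rightarrow> 'a \<Rightarrow> 'a \<Rightarrow> bool" where
  "same_cluster P u v \<longleftrightarrow> (\<exists>C\<in>P. u \<in> C \<and> v \<in> C)"

definition cc_cost :: "'a set \<Rightarrow> ('a \<Rightarrow> 'a \<Rightarrow> bool) \<Rightarrow> 'a set set \<Rightarrow> nat" where
  "cc_cost V E P = card {{u, v} | u v. u \<in> V \<and> v \<in> V \<and> u \<noteq> v \<and>
      ((E u v \<and> \<not> same_cluster P u v) \<or> (\<not> E u v \<and> same_cluster P u v))}"

definition cc_opt :: "'a set \<Rightarrow> ('a \<Rightarrow> 'a \<Rightarrow> bool) \<Rightarrow> nat" where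
  "cc_opt V E = Min {cc_cost V E P | P. partition_on V P}"

text \<open>+neighbourhood, including the vertex itself (self-loop convention).\<close>
definition plus_nbhd :: "'a set \<Rightarrow> ('a \<Rightarrow> 'a \<Rightarrow> bool) \<Rightarrow> 'a \<Rightarrow> 'a set" where
  "plus_nbhd V E u = {v \<in> V. v = u \<or> E u v}"

definition beta :: real where "beta = 1/10"

definition premarked :: "'a set \<Rightarrow> ('a \<Rightarrow> 'a \<Rightarrow> bool) \<Rightarrow> 'a set set \<Rightarrow> 'a set \<Rightarrow> 'a set" where
  "premarked V E Cl C = {u \<in> C. real (card (plus_nbhd V E u - C \<union> (C - plus_nbhd V E u)))
                                   > beta / 2 * real (card C)}"

definition marked :: "'a set \<Rightarrow> ('a \<Rightarrow> 'a \<Rightarrow> bool) \<Rightarrow> 'a set set \<Rightarrow> 'a set" where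
  "marked V E Cl = (\<Union>C \<in> {C \<in> Cl. card C \<ge> 2}.
      (if real (card (premarked V E Cl C)) \<ge> beta * real (card C) / 3 then C
       else premarked V E Cl C))"

definition atoms :: "'a set \<Rightarrow> ('a \<Rightarrow> 'a \<Rightarrow> bool) \<Rightarrow> 'a set set \<Rightarrow> 'a set set" where
  "atoms V E Cl = {C - marked V E Cl | C. C \<in> Cl \<and> C - marked V E Cl \<noteq> {}}
                  \<union> {{u} | u. u \<in> marked V E Cl}"

definition mod_E :: "'a set \<Rightarrow> ('a \<Rightarrow> 'a \<Rightarrow> bool) \<Rightarrow> 'a set set \<Rightarrow> 'a \<Rightarrow> 'a \<Rightarrow> bool" where
  "mod_E V E Cl u v \<longleftrightarrow> E u v \<or> (\<exists>K \<in> atoms V E Cl. u \<in> K \<and> v \<in> K)"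

definition atom_of :: "'a set \<Rightarrow> ('a \<Rightarrow> 'a \<Rightarrow> bool) \<Rightarrow> 'a set set \<Rightarrow> 'a \<Rightarrow> 'a set" where
  "atom_of V E Cl u = (THE K. K \<in> atoms V E Cl \<and> u \<in> K)"

definition wt :: "'a set \<Rightarrow> ('a \<Rightarrow> 'a \<Rightarrow> bool) \<Rightarrow> 'a set set \<Rightarrow> 'a \<Rightarrow> 'a \<Rightarrow> real" where
  "wt V E Cl u v = (let Ku = atom_of V E Cl u; Kv = atom_of V E Cl v in
     real (card {(u', v') \<in> Ku \<times> Kv. mod_E V E Cl u' v' \<or> u' = v'})
       / (real (card Ku) * real (card Kv)))"

definition wset :: "'a set \<Rightarrow> ('a \<Rightarrow> 'a \<Rightarrow> bool) \<Rightarrow> 'a set set \<Rightarrow> 'a \<Rightarrow> 'a set \<Rightarrow> real" where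
  "wset V E Cl u V' = (\<Sum>v\<in>V'. wt V E Cl u v)"

end

theory Submission
  imports Defs
begin
definition OB :: "'a set \<Rightarrow> ('a \<Rightarrow> 'a \<Rightarrow> bool) \<Rightarrow> 'a set set \<Rightarrow> ('a \<times> 'a) set" where
  "OB V F P = {(u,v) \<in> V \<times> V. u \<noteq> v \<and> ((F u v \<and> \<not> same_cluster P u v) \<or> (\<not> F u v \<and> same_cluster P u v))}"

lemma same_cluster_sym: "same_cluster P u v \<longleftrightarrow> same_cluster P v u"
  unfolding same_cluster_def by blast

lemma cost_OB:
  fixes V :: "'a::linorder set"
  assumes fin: "finite V" and sym: "\<And>u v. F u v \<longleftrightarrow> F v u"
  shows "2 * cc_cost V F P = card (OB V F P)"
proof -
  define S where "S = {(u,v) \<in> OB V F P. u < v}"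
  define sw where "sw = (\<lambda>(u::'a,v::'a). (v,u))"
  have symOB: "(v,u) \<in> OB V F P" if "(u,v) \<in> OB V F P" for u v
    using that sym[of u v] same_cluster_sym[of P u v] unfolding OB_def by auto
  have OBeq: "OB V F P = S \<union> sw ` S"
  proof
    show "OB V F P \<subseteq> S \<union> sw ` S"
    proof
      fix x assume x: "x \<in> OB V F P"
      obtain u v where uv: "x = (u,v)" by (cases x)
      have "u \<noteq> v" using x uv unfolding OB_def by auto
      then have "u < v \<or> v < u" by auto
      then show "x \<in> S \<union> sw ` S"
      proof
        assume "u < v" then show ?thesis using x uv S_def by auto
      next
        assume "v < u"
        then have "(v,u) \<in> S" using symOB x uv S_def by auto
        then show ?thesis unfolding uv sw_def by (auto intro: image_eqI[where x="(v,u)"])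
      qed
    qed
  next
    show "S \<union> sw ` S \<subseteq> OB V F P" using symOB unfolding S_def sw_def by auto
  qed
  have finOB: "finite (OB V F P)" unfolding OB_def using fin
    by (auto intro: finite_subset[of _ "V \<times> V"])
  have finS: "finite S" using finOB OBeq by auto
  have disj: "S \<inter> sw ` S = {}" unfolding S_def sw_def by auto
  have injsw: "inj_on sw S" unfolding sw_def inj_on_def by auto
  have c1: "card (OB V F P) = 2 * card S"
    using OBeq disj card_Un_disjoint[of S "sw ` S"] finS card_image[OF injsw] by simp
  have Deq: "{{u, v} | u v. u \<in> V \<and> v \<in> V \<and> u \<noteq> v \<and>
      ((F u v \<and> \<not> same_cluster P u v) \<or> (\<not> F u v \<and> same_cluster P u v))} = (\<lambda>(u,v). {u,v}) ` S"
  proof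
    show "(\<lambda>(u,v). {u,v}) ` S \<subseteq> {{u, v} | u v. u \<in> V \<and> v \<in> V \<and> u \<noteq> v \<and>
      ((F u v \<and> \<not> same_cluster P u v) \<or> (\<not> F u v \<and> same_cluster P u v))}"
      unfolding S_def OB_def by force
  next
    show "{{u, v} | u v. u \<in> V \<and> v \<in> V \<and> u \<noteq> v \<and>
      ((F u v \<and> \<not> same_cluster P u v) \<or> (\<not> F u v \<and> same_cluster P u v))} \<subseteq> (\<lambda>(u,v). {u,v}) ` S"
    proof
      fix d assume "d \<in> {{u, v} | u v. u \<in> V \<and> v \<in> V \<and> u \<noteq> v \<and>
        ((F u v \<and> \<not> same_cluster P u v) \<or> (\<not> F u v \<and> same_cluster P u v))}"
      then obtain u v where d: "d = {u,v}" and uv: "(u,v) \<in> OB V F P" unfolding OB_def by blast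
      have "u \<noteq> v" using uv unfolding OB_def by auto
      then have "u < v \<or> v < u" by auto
      then show "d \<in> (\<lambda>(u,v). {u,v}) ` S"
      proof
        assume "u < v" then show ?thesis using uv d S_def by (auto intro: image_eqI[where x="(u,v)"])
      next
        assume "v < u" then have "(v,u) \<in> S" using symOB uv S_def by auto
        then show ?thesis using d by (auto intro: image_eqI[where x="(v,u)"])
      qed
    qed
  qed
  have injd: "inj_on (\<lambda>(u,v). {u,v}) S"
  proof (rule inj_onI)
    fix x y assume x: "x \<in> S" and y: "y \<in> S" and e: "(\<lambda>(u,v). {u,v}) x = (\<lambda>(u,v). {u,v}) y"
    obtain a b where ab: "x = (a,b)" by (cases x)
    obtain c d where cd: "y = (c,d)" by (cases y)
    have "a < b" "c < d" using x y ab cd S_def by auto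
    moreover have "{a,b} = {c,d}" using e ab cd by simp
    ultimately show "x = y" using ab cd by (auto simp: doubleton_eq_iff)
  qed
  show ?thesis unfolding cc_cost_def Deq card_image[OF injd] c1 by simp
qed

definition iso :: "'a set set \<Rightarrow> 'a set \<Rightarrow> 'a set set" where
  "iso P S = {D - S | D. D \<in> P \<and> D - S \<noteq> {}} \<union> {S}"

lemma iso_partition:
  assumes "partition_on V P" "S \<subseteq> V" "S \<noteq> {}"
  shows "partition_on V (iso P S)"
proof (rule partition_onI)
  show "\<Union> (iso P S) = V" using assms partition_onD1[OF assms(1)] unfolding iso_def by auto
  show "{} \<notin> iso P S" using assms unfolding iso_def by auto
  fix p q assume p: "p \<in> iso P S" and q: "q \<in> iso P S" and pq: "p \<noteq> q"
  show "disjnt p q"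
  proof -
    have dP: "disjoint P" using partition_onD2[OF assms(1)] .
    show ?thesis using p q pq dP unfolding iso_def disjnt_def pairwise_def by auto
  qed
qed

lemma iso_same:
  "same_cluster (iso P S) u v \<longleftrightarrow> (u \<in> S \<and> v \<in> S) \<or> (u \<notin> S \<and> v \<notin> S \<and> same_cluster P u v)"
  unfolding same_cluster_def iso_def by auto

lemma part_same_trans:
  assumes "partition_on V P" "same_cluster P u v" "same_cluster P v w"
  shows "same_cluster P u w"
  using assms partition_onD2[OF assms(1)] unfolding same_cluster_def disjoint_def pairwise_def disjnt_def
  by blast

lemma part_same_refl:
  assumes "partition_on V P" "u \<in> V" shows "same_cluster P u u"
  using assms partition_onD1[OF assms(1)] unfolding same_cluster_def by auto

lemma card_diff_le:
  assumes "finite A" "finite B"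
  shows "int (card A) - int (card B) = int (card (A - B)) - int (card (B - A))"
proof -
  have a: "card A = card (A - B) + card (A \<inter> B)"
    using card_Int_Diff[OF assms(1), of B] by simp
  have b: "card B = card (B - A) + card (A \<inter> B)"
    using card_Int_Diff[OF assms(2), of A] by (simp add: Int_commute)
  show ?thesis using a b by simp
qed

locale inst =
  fixes V :: "'a::linorder set" and E :: "'a \<Rightarrow> 'a \<Rightarrow> bool" and Cl :: "'a set set"
  assumes fin: "finite V" and symE: "\<And>u v. E u v \<longleftrightarrow> E v u" and part: "partition_on V Cl"
begin

abbreviation "AT \<equiv> atoms V E Cl"
abbreviation "MK \<equiv> marked V E Cl"
abbreviation "E' \<equiv> mod_E V E Cl"
abbreviation "ka \<equiv> atom_of V E Cl"
abbreviation "pm \<equiv> premarked V E Cl"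

definition mk1 :: "'a set \<Rightarrow> 'a set" where
  "mk1 C = (if real (card (pm C)) \<ge> beta * real (card C) / 3 then C else pm C)"

lemma pm_sub: "pm C \<subseteq> C" unfolding premarked_def by auto

lemma mk1_sub: "mk1 C \<subseteq> C" unfolding mk1_def using pm_sub by auto

lemma MK_eq: "MK = (\<Union>C \<in> {C \<in> Cl. card C \<ge> 2}. mk1 C)"
  unfolding marked_def mk1_def by simp

lemma Cl_disj: "C \<in> Cl \<Longrightarrow> C' \<in> Cl \<Longrightarrow> C \<noteq> C' \<Longrightarrow> C \<inter> C' = {}"
  using partition_onD2[OF part] unfolding disjoint_def pairwise_def disjnt_def by blast

lemma Cl_sub: "C \<in> Cl \<Longrightarrow> C \<subseteq> V" using partition_onD1[OF part] by auto

lemma Cl_ne: "C \<in> Cl \<Longrightarrow> C \<noteq> {}" using partition_onD3[OF part] by auto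

lemma MK_Int: assumes "C \<in> Cl"
  shows "C \<inter> MK = (if card C \<ge> 2 then mk1 C else {})"
proof -
  have "C \<inter> MK = (\<Union>C' \<in> {C' \<in> Cl. card C' \<ge> 2}. C \<inter> mk1 C')" unfolding MK_eq by auto
  also have "\<dots> = (if card C \<ge> 2 then mk1 C else {})"
  proof -
    have "C \<inter> mk1 C' = (if C' = C then mk1 C else {})" if "C' \<in> Cl" for C'
      using Cl_disj[OF assms that] mk1_sub[of C'] mk1_sub[of C] by auto
    then show ?thesis using assms by auto
  qed
  finally show ?thesis .
qed

lemma MK_sub: "MK \<subseteq> V" unfolding MK_eq using mk1_sub Cl_sub by blast

lemma AT_cases: "K \<in> AT \<Longrightarrow> (\<exists>C\<in>Cl. K = C - MK \<and> K \<noteq> {}) \<or> (\<exists>u\<in>MK. K = {u})"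
  unfolding atoms_def by blast

lemma AT_sub: "K \<in> AT \<Longrightarrow> K \<subseteq> V"
  using AT_cases Cl_sub MK_sub by blast

lemma AT_ne: "K \<in> AT \<Longrightarrow> K \<noteq> {}"
  using AT_cases by blast

lemma AT_disj: assumes "K \<in> AT" "K' \<in> AT" "x \<in> K" "x \<in> K'" shows "K = K'"
proof -
  { fix C u assume C: "C \<in> Cl" "K = C - MK" and u: "u \<in> MK" "K' = {u}"
    have False using assms C u by auto }
  note a = this
  { fix C C' assume C: "C \<in> Cl" "K = C - MK" and C': "C' \<in> Cl" "K' = C' - MK"
    have "C = C'" using Cl_disj[OF C(1) C'(1)] assms C C' by auto
    then have "K = K'" using C C' by simp }
  note b = this
  show ?thesis using AT_cases[OF assms(1)] AT_cases[OF assms(2)] a b assms by blast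
qed

lemma AT_cover: assumes "u \<in> V" shows "\<exists>K\<in>AT. u \<in> K"
proof (cases "u \<in> MK")
  case True then show ?thesis unfolding atoms_def by blast
next
  case False
  obtain C where "C \<in> Cl" "u \<in> C" using assms partition_onD1[OF part] by auto
  then show ?thesis using False unfolding atoms_def by blast
qed

lemma AT_partition: "partition_on V AT"
proof (rule partition_onI)
  show "\<Union> AT = V" using AT_sub AT_cover by blast
  show "{} \<notin> AT" using AT_ne by blast
  fix p q assume "p \<in> AT" "q \<in> AT" "p \<noteq> q" then show "disjnt p q"
    using AT_disj unfolding disjnt_def by blast
qed

lemma ka_props: assumes "u \<in> V" shows "ka u \<in> AT" "u \<in> ka u"
proof -
  obtain K where K: "K \<in> AT" "u \<in> K" using AT_cover[OF assms] by blast
  have "ka u = K" unfolding atom_of_def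
    by (rule the_equality) (use K AT_disj in auto)
  then show "ka u \<in> AT" "u \<in> ka u" using K by auto
qed

lemma ka_eq: assumes "K \<in> AT" "u \<in> K" shows "ka u = K"
  unfolding atom_of_def by (rule the_equality) (use assms AT_disj in auto)

lemma E'_sym: "E' u v \<longleftrightarrow> E' v u"
  unfolding mod_E_def using symE by blast

lemma E'_in: "K \<in> AT \<Longrightarrow> x \<in> K \<Longrightarrow> y \<in> K \<Longrightarrow> E' x y"
  unfolding mod_E_def by blast

lemma E'_out: assumes "K \<in> AT" "x \<in> K" "y \<notin> K" "E' x y" shows "E x y"
  using assms AT_disj unfolding mod_E_def by blast

lemma big_atom:
  assumes K: "K \<in> AT" and c: "card K \<ge> 2"
  shows "\<exists>C0\<in>Cl. K = C0 - pm C0 \<and> 30 * card (pm C0) < card C0 \<and>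
     (\<forall>x\<in>K. 20 * card (plus_nbhd V E x - C0 \<union> (C0 - plus_nbhd V E x)) \<le> card C0)"
proof -
  have "\<not> (\<exists>u\<in>MK. K = {u})" using c by auto
  then obtain C0 where C0: "C0 \<in> Cl" "K = C0 - MK" "K \<noteq> {}" using AT_cases[OF K] by blast
  have fC0: "finite C0" using Cl_sub[OF C0(1)] fin finite_subset by blast
  have "card K \<le> card C0" using C0 fC0 by (simp add: card_mono)
  then have c2: "card C0 \<ge> 2" using c by simp
  have KC: "K = C0 - (C0 \<inter> MK)" using C0 by auto
  then have K1: "K = C0 - mk1 C0" using MK_Int[OF C0(1)] c2 by simp
  have few: "\<not> (real (card (pm C0)) \<ge> beta * real (card C0) / 3)"
  proof
    assume "real (card (pm C0)) \<ge> beta * real (card C0) / 3"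
    then have "mk1 C0 = C0" unfolding mk1_def by simp
    then show False using K1 C0(3) by simp
  qed
  then have K2: "K = C0 - pm C0" using K1 unfolding mk1_def by simp
  have f1: "30 * card (pm C0) < card C0" using few unfolding beta_def by simp
  have f2: "20 * card (plus_nbhd V E x - C0 \<union> (C0 - plus_nbhd V E x)) \<le> card C0" if x: "x \<in> K" for x
  proof -
    have "x \<in> C0" "x \<notin> pm C0" using x K2 by auto
    then have "\<not> real (card (plus_nbhd V E x - C0 \<union> (C0 - plus_nbhd V E x))) > beta / 2 * real (card C0)"
      unfolding premarked_def by auto
    then show ?thesis unfolding beta_def by simp
  qed
  show ?thesis using C0(1) K2 f1 f2 by blast
qed

definition outn :: "'a set \<Rightarrow> 'a \<Rightarrow> nat" where
  "outn K x = card {y \<in> V. y \<notin> K \<and> E' x y}"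

lemma out_bound:
  assumes K: "K \<in> AT" and c: "card K \<ge> 2" and x: "x \<in> K"
  shows "58 * outn K x < 5 * card K"
proof -
  obtain C0 where C0: "C0 \<in> Cl" "K = C0 - pm C0" "30 * card (pm C0) < card C0"
    and d: "20 * card (plus_nbhd V E x - C0 \<union> (C0 - plus_nbhd V E x)) \<le> card C0"
    using big_atom[OF K c] x by blast
  have fC0: "finite C0" using Cl_sub[OF C0(1)] fin finite_subset by blast
  have fN: "finite (plus_nbhd V E x)" unfolding plus_nbhd_def using fin by auto
  have sub: "{y \<in> V. y \<notin> K \<and> E' x y} \<subseteq> (plus_nbhd V E x - C0 \<union> (C0 - plus_nbhd V E x)) \<union> pm C0"
  proof
    fix y assume y: "y \<in> {y \<in> V. y \<notin> K \<and> E' x y}"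
    then have "E x y" using E'_out[OF K x] by auto
    then have "y \<in> plus_nbhd V E x" using y unfolding plus_nbhd_def by auto
    then show "y \<in> (plus_nbhd V E x - C0 \<union> (C0 - plus_nbhd V E x)) \<union> pm C0"
      using y C0(2) by auto
  qed
  have "outn K x \<le> card ((plus_nbhd V E x - C0 \<union> (C0 - plus_nbhd V E x)) \<union> pm C0)"
    unfolding outn_def by (rule card_mono) (use fC0 fN pm_sub[of C0] finite_subset in auto, use sub in auto)
  also have "\<dots> \<le> card (plus_nbhd V E x - C0 \<union> (C0 - plus_nbhd V E x)) + card (pm C0)"
    by (rule card_Un_le)
  finally have o: "outn K x \<le> card (plus_nbhd V E x - C0 \<union> (C0 - plus_nbhd V E x)) + card (pm C0)" .
  have kk: "card K = card C0 - card (pm C0)" unfolding C0(2)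
    by (rule card_Diff_subset) (use pm_sub[of C0] fC0 finite_subset in auto)
  have "card (pm C0) \<le> card C0" using pm_sub fC0 by (simp add: card_mono)
  then show ?thesis using o kk d C0(3) by linarith
qed

end

definition swp :: "('a \<times> 'b) set \<Rightarrow> ('b \<times> 'a) set" where
  "swp X = (\<lambda>(x,y). (y,x)) ` X"

lemma swp_mem: "(a,b) \<in> swp X \<longleftrightarrow> (b,a) \<in> X"
  unfolding swp_def by force

lemma card_swp: "card (swp X) = card X"
  unfolding swp_def by (rule card_image) (auto simp: inj_on_def)

lemma finite_swp: "finite X \<Longrightarrow> finite (swp X)"
  unfolding swp_def by simp

lemma card_Un_swp_le: "card (X \<union> swp X) \<le> 2 * card X"
  using card_Un_le[of X "swp X"] card_swp[of X] by simp

lemma card_filter_split: assumes "finite A"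
  shows "card {y\<in>A. \<not> Q y} + card {y\<in>A. Q y} = card A"
proof -
  have "A = {y\<in>A. \<not> Q y} \<union> {y\<in>A. Q y}" by auto
  then have "card A = card ({y\<in>A. \<not> Q y} \<union> {y\<in>A. Q y})" by simp
  also have "\<dots> = card {y\<in>A. \<not> Q y} + card {y\<in>A. Q y}"
    by (rule card_Un_disjoint) (use assms in auto)
  finally show ?thesis by simp
qed

context inst
begin

abbreviation "OBp P \<equiv> OB V E' P"

lemma finOB: "finite (OBp P)"
  unfolding OB_def using fin by (auto intro: finite_subset[of _ "V \<times> V"])

lemma cost2: "2 * cc_cost V E' P = card (OBp P)"
  by (rule cost_OB[OF fin]) (rule E'_sym)

lemma better:
  assumes "card (OBp P) \<le> card (OBp Q)"
  shows "card (OBp P - OBp Q) \<le> card (OBp Q - OBp P)"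
  using card_diff_le[OF finOB[of P] finOB[of Q]] assms by linarith

lemma opt_exists:
  "\<exists>P. partition_on V P \<and> cc_cost V E' P = cc_opt V E' \<and>
      (\<forall>Q. partition_on V Q \<longrightarrow> cc_cost V E' P \<le> cc_cost V E' Q)"
proof -
  let ?S = "{cc_cost V E' P | P. partition_on V P}"
  have fS: "finite ?S"
  proof -
    have "?S = (\<lambda>P. cc_cost V E' P) ` {P. partition_on V P}" by auto
    then show ?thesis using finitely_many_partition_on[OF fin] by simp
  qed
  have neS: "?S \<noteq> {}" using AT_partition by auto
  have "cc_opt V E' \<in> ?S" unfolding cc_opt_def using Min_in[OF fS neS] .
  then obtain P where P: "partition_on V P" "cc_cost V E' P = cc_opt V E'" by auto
  have "\<forall>Q. partition_on V Q \<longrightarrow> cc_cost V E' P \<le> cc_cost V E' Q"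
    using P(2) Min_le[OF fS] unfolding cc_opt_def by auto
  then show ?thesis using P by blast
qed

lemma sc_iff: assumes "partition_on V P" "D \<in> P" "u \<in> D"
  shows "same_cluster P u v \<longleftrightarrow> v \<in> D"
  using assms partition_onD2[OF assms(1)] unfolding same_cluster_def disjoint_def pairwise_def disjnt_def
  by blast

lemma no_split:
  assumes P: "partition_on V P" and opt: "\<And>Q. partition_on V Q \<Longrightarrow> card (OBp P) \<le> card (OBp Q)"
    and K: "K \<in> AT"
  shows "\<exists>D\<in>P. K \<subseteq> D"
proof (rule ccontr)
  assume nos: "\<not> (\<exists>D\<in>P. K \<subseteq> D)"
  have KV: "K \<subseteq> V" using AT_sub[OF K] .
  have Kne: "K \<noteq> {}" using AT_ne[OF K] .
  have fK: "finite K" using KV fin finite_subset by blast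
  have fP: "finite P" using finite_elements[OF fin P] .
  have UP: "\<Union>P = V" using partition_onD1[OF P] by simp
  have PV: "D \<subseteq> V" if "D \<in> P" for D using that UP by auto
  have fD: "finite D" if "D \<in> P" for D using PV[OF that] fin finite_subset by blast
  define k where "k = card K"
  have k2: "k \<ge> 2"
  proof (rule ccontr)
    assume "\<not> k \<ge> 2"
    moreover have "card K > 0" using Kne fK by (simp add: card_gt_0_iff)
    ultimately have "card K = 1" using k_def by linarith
    then obtain x where "K = {x}" using card_1_singletonE by blast
    then show False using nos KV UP by auto
  qed
  define a where "a = (\<lambda>D. card (D \<inter> K))"
  have Pne: "P \<noteq> {}" using UP KV Kne by auto
  define m where "m = Max (a ` P)"
  have "m \<in> a ` P" unfolding m_def using fP Pne by simp
  then obtain D1 where D1: "D1 \<in> P" "a D1 = m" by auto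
  have amax: "a D \<le> a D1" if "D \<in> P" for D using D1 that fP unfolding m_def by simp
  define A1 where "A1 = D1 \<inter> K"
  define B1 where "B1 = D1 - K"
  define R where "R = K - D1"
  define a1 where "a1 = card A1"
  define b1 where "b1 = card B1"
  define r where "r = card R"
  have fA1: "finite A1" "finite B1" "finite R" using fD[OF D1(1)] fK unfolding A1_def B1_def R_def by auto
  have ka: "k = a1 + r" unfolding k_def a1_def r_def A1_def R_def
    using card_Int_Diff[OF fK, of D1] by (simp add: Int_commute)
  have r1: "r \<ge> 1" using nos D1(1) fA1(3) unfolding r_def R_def by (auto simp: card_gt_0_iff Suc_le_eq)
  define Ob where "Ob = 5 * real k / 58"
  have outb: "real (outn K x) \<le> Ob" if "x \<in> K" for x
    using out_bound[OF K _ that] k2 unfolding Ob_def k_def by simp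
  define Xo where "Xo = Sigma K (\<lambda>x. {y \<in> V. y \<notin> K \<and> E' x y})"
  have fXo: "finite Xo" unfolding Xo_def using fK fin by auto
  have cXo: "real (card Xo) \<le> real k * Ob"
  proof -
    have "card Xo = (\<Sum>x\<in>K. outn K x)" unfolding Xo_def outn_def using fK fin by simp
    then have "real (card Xo) = (\<Sum>x\<in>K. real (outn K x))" by simp
    also have "\<dots> \<le> (\<Sum>x\<in>K. Ob)" by (rule sum_mono) (use outb in auto)
    finally show ?thesis unfolding k_def by simp
  qed
  define Q1 where "Q1 = iso P K"
  have Q1p: "partition_on V Q1" unfolding Q1_def using iso_partition[OF P KV Kne] .
  have sub1: "OBp Q1 - OBp P \<subseteq> Xo \<union> swp Xo"
  proof
    fix z assume z: "z \<in> OBp Q1 - OBp P"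
    obtain u v where uv: "z = (u,v)" by (cases z)
    show "z \<in> Xo \<union> swp Xo"
      using z E'_in[OF K] E'_sym[of u v] unfolding uv Q1_def OB_def iso_same Xo_def by (auto simp: swp_mem)
  qed
  define X1 where "X1 = Sigma K (\<lambda>x. {y \<in> K. \<not> same_cluster P x y})"
  define X2 where "X2 = Sigma A1 (\<lambda>x. {y \<in> B1. \<not> E' x y})"
  have sup1: "X1 \<union> X2 \<union> swp X2 \<subseteq> OBp P - OBp Q1"
  proof
    fix z assume z: "z \<in> X1 \<union> X2 \<union> swp X2"
    obtain u v where uv: "z = (u,v)" by (cases z)
    have scD1: "same_cluster P x y" if "x \<in> D1" "y \<in> D1" for x y
      using that D1(1) unfolding same_cluster_def by blast
    have "u \<in> V" "v \<in> V" using z KV PV[OF D1(1)] unfolding uv X1_def X2_def A1_def B1_def by (auto simp: swp_mem)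
    moreover have "u \<noteq> v" using z part_same_refl[OF P] KV unfolding uv X1_def X2_def A1_def B1_def
      by (auto simp: swp_mem)
    ultimately show "z \<in> OBp P - OBp Q1"
      using z E'_in[OF K] E'_sym[of u v] scD1 unfolding uv Q1_def OB_def iso_same X1_def X2_def A1_def B1_def
      by (auto simp: swp_mem)
  qed
  have fX2: "finite X2" unfolding X2_def using fA1 by auto
  have fX1: "finite X1" unfolding X1_def using fK by auto
  have cX1: "card X1 \<ge> k * (k - a1)"
  proof -
    have each: "card {y \<in> K. \<not> same_cluster P x y} \<ge> k - a1" if x: "x \<in> K" for x
    proof -
      obtain D where D: "D \<in> P" "x \<in> D" using x KV UP by auto
      have "{y \<in> K. same_cluster P x y} = D \<inter> K" using sc_iff[OF P D] by auto
      then have c1: "card {y \<in> K. same_cluster P x y} \<le> a1" using amax[OF D(1)] unfolding a_def a1_def A1_def by simp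
      have "card {y \<in> K. \<not> same_cluster P x y} + card {y \<in> K. same_cluster P x y} = k"
        unfolding k_def by (rule card_filter_split[OF fK])
      then show ?thesis using c1 by linarith
    qed
    have "card X1 = (\<Sum>x\<in>K. card {y \<in> K. \<not> same_cluster P x y})" unfolding X1_def using fK by simp
    also have "\<dots> \<ge> (\<Sum>x\<in>K. k - a1)" by (rule sum_mono) (use each in auto)
    finally show ?thesis unfolding k_def by simp
  qed
  have cX2: "real (card X2) \<ge> real a1 * real b1 - real a1 * Ob"
  proof -
    have each: "real (card {y \<in> B1. \<not> E' x y}) \<ge> real b1 - Ob" if x: "x \<in> A1" for x
    proof -
      have xK: "x \<in> K" using x A1_def by auto
      have "{y \<in> B1. E' x y} \<subseteq> {y \<in> V. y \<notin> K \<and> E' x y}" using PV[OF D1(1)] unfolding B1_def by auto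
      then have "card {y \<in> B1. E' x y} \<le> outn K x" unfolding outn_def by (rule card_mono[rotated]) (use fin in auto)
      moreover have "card {y \<in> B1. \<not> E' x y} + card {y \<in> B1. E' x y} = b1"
        unfolding b1_def by (rule card_filter_split[OF fA1(2)])
      ultimately show ?thesis using outb[OF xK] by linarith
    qed
    have "card X2 = (\<Sum>x\<in>A1. card {y \<in> B1. \<not> E' x y})" unfolding X2_def using fA1 by simp
    then have "real (card X2) = (\<Sum>x\<in>A1. real (card {y \<in> B1. \<not> E' x y}))" by simp
    also have "\<dots> \<ge> (\<Sum>x\<in>A1. real b1 - Ob)" by (rule sum_mono) (use each in auto)
    finally show ?thesis unfolding a1_def by (simp add: algebra_simps)
  qed
  have disj1: "X1 \<inter> X2 = {}" "X1 \<inter> swp X2 = {}" "X2 \<inter> swp X2 = {}"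
    unfolding X1_def X2_def B1_def A1_def by (auto simp: swp_mem)
  have cU1: "card (X1 \<union> X2 \<union> swp X2) = card X1 + 2 * card X2"
  proof -
    have "card (X1 \<union> X2 \<union> swp X2) = card (X1 \<union> X2) + card (swp X2)"
      by (rule card_Un_disjoint) (use fX1 fX2 finite_swp disj1 in auto)
    also have "card (X1 \<union> X2) = card X1 + card X2"
      by (rule card_Un_disjoint) (use fX1 fX2 disj1 in auto)
    finally show ?thesis using card_swp[of X2] by simp
  qed
  have "card (X1 \<union> X2 \<union> swp X2) \<le> card (OBp P - OBp Q1)"
    by (rule card_mono) (use finOB sup1 in auto)
  also have "\<dots> \<le> card (OBp Q1 - OBp P)" by (rule better[OF opt[OF Q1p]])
  also have "\<dots> \<le> card (Xo \<union> swp Xo)" by (rule card_mono) (use fXo finite_swp sub1 in auto)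
  also have "\<dots> \<le> 2 * card Xo" by (rule card_Un_swp_le)
  finally have F1n: "card X1 + 2 * card X2 \<le> 2 * card Xo" using cU1 by simp
  have F1: "real k * (real k - real a1) + 2 * (real a1 * real b1 - real a1 * Ob) \<le> 2 * (real k * Ob)"
  proof -
    have "k - a1 = r" using ka by simp
    then have "real (k * (k - a1)) = real k * (real k - real a1)" using ka by simp
    then have h1: "real (card X1) \<ge> real k * (real k - real a1)" using cX1 by (metis of_nat_le_iff)
    have "real (card X1 + 2 * card X2) \<le> real (2 * card Xo)" using F1n by (simp only: of_nat_le_iff)
    then have "real (card X1) + 2 * real (card X2) \<le> 2 * real (card Xo)" by simp
    note h2 = this
    have "real k * (real k - real a1) + 2 * (real a1 * real b1 - real a1 * Ob) \<le> real (card X1) + 2 * real (card X2)"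
      by (rule add_mono[OF h1]) (use cX2 in simp)
    also have "\<dots> \<le> 2 * real (card Xo)" by (rule h2)
    also have "\<dots> \<le> 2 * (real k * Ob)" using cXo by simp
    finally show ?thesis .
  qed
  define S2 where "S2 = D1 \<union> K"
  define Q2 where "Q2 = iso P S2"
  have Q2p: "partition_on V Q2" unfolding Q2_def S2_def using iso_partition[OF P] KV PV[OF D1(1)] Kne by auto
  define Y where "Y = Sigma R (\<lambda>x. {y \<in> B1. \<not> E' x y}) \<union> Sigma R (\<lambda>x. {y \<in> V. y \<notin> K \<and> E' x y})"
  have fY: "finite Y" unfolding Y_def using fA1 fin by auto
  have sub2: "OBp Q2 - OBp P \<subseteq> Y \<union> swp Y"
  proof
    fix z assume z: "z \<in> OBp Q2 - OBp P"
    obtain u v where uv: "z = (u,v)" by (cases z)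
    have scD1: "same_cluster P x y \<longleftrightarrow> y \<in> D1" if "x \<in> D1" for x y
      using sc_iff[OF P D1(1) that] .
    have scD1': "same_cluster P y x \<longleftrightarrow> y \<in> D1" if "x \<in> D1" for x y
      using sc_iff[OF P D1(1) that] same_cluster_sym by metis
    show "z \<in> Y \<union> swp Y"
      using z E'_in[OF K] E'_sym[of u v] scD1 scD1'
      unfolding uv Q2_def S2_def OB_def iso_same Y_def R_def B1_def
      by (auto simp: swp_mem)
  qed
  define Z where "Z = R \<times> A1"
  have sup2: "Z \<union> swp Z \<subseteq> OBp P - OBp Q2"
  proof
    fix z assume z: "z \<in> Z \<union> swp Z"
    obtain u v where uv: "z = (u,v)" by (cases z)
    have scD1: "same_cluster P x y \<longleftrightarrow> y \<in> D1" if "x \<in> D1" for x y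
      using sc_iff[OF P D1(1) that] .
    have scD1': "same_cluster P y x \<longleftrightarrow> y \<in> D1" if "x \<in> D1" for x y
      using sc_iff[OF P D1(1) that] same_cluster_sym by metis
    show "z \<in> OBp P - OBp Q2"
      using z E'_in[OF K] KV scD1 scD1' unfolding uv Q2_def S2_def OB_def iso_same Z_def R_def A1_def
      by (auto simp: swp_mem)
  qed
  have fZ: "finite Z" unfolding Z_def using fA1 by auto
  have cZ: "card (Z \<union> swp Z) = 2 * r * a1"
  proof -
    have "Z \<inter> swp Z = {}" unfolding Z_def R_def A1_def by (auto simp: swp_mem)
    then have "card (Z \<union> swp Z) = card Z + card (swp Z)"
      using card_Un_disjoint fZ finite_swp by blast
    then show ?thesis using card_swp[of Z] unfolding Z_def r_def a1_def by (simp add: card_cartesian_product)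
  qed
  have cY: "real (card Y) \<le> real r * real b1 + real r * Ob"
  proof -
    have "card Y \<le> card (Sigma R (\<lambda>x. {y \<in> B1. \<not> E' x y})) + card (Sigma R (\<lambda>x. {y \<in> V. y \<notin> K \<and> E' x y}))"
      unfolding Y_def by (rule card_Un_le)
    moreover have "card (Sigma R (\<lambda>x. {y \<in> B1. \<not> E' x y})) \<le> r * b1"
    proof -
      have "Sigma R (\<lambda>x. {y \<in> B1. \<not> E' x y}) \<subseteq> R \<times> B1" by auto
      then have "card (Sigma R (\<lambda>x. {y \<in> B1. \<not> E' x y})) \<le> card (R \<times> B1)"
        by (rule card_mono[rotated]) (use fA1 in auto)
      then show ?thesis unfolding r_def b1_def by (simp add: card_cartesian_product)
    qed
    moreover have "real (card (Sigma R (\<lambda>x. {y \<in> V. y \<notin> K \<and> E' x y}))) \<le> real r * Ob"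
    proof -
      have "card (Sigma R (\<lambda>x. {y \<in> V. y \<notin> K \<and> E' x y})) = (\<Sum>x\<in>R. outn K x)"
        unfolding outn_def using fA1 fin by simp
      then have "real (card (Sigma R (\<lambda>x. {y \<in> V. y \<notin> K \<and> E' x y}))) = (\<Sum>x\<in>R. real (outn K x))" by simp
      also have "\<dots> \<le> (\<Sum>x\<in>R. Ob)" by (rule sum_mono) (use outb R_def in auto)
      finally show ?thesis unfolding r_def by simp
    qed
    ultimately show ?thesis by (smt (verit) of_nat_add of_nat_mult of_nat_mono)
  qed
  have "card (Z \<union> swp Z) \<le> card (OBp P - OBp Q2)"
    by (rule card_mono) (use finOB sup2 in auto)
  also have "\<dots> \<le> card (OBp Q2 - OBp P)" by (rule better[OF opt[OF Q2p]])
  also have "\<dots> \<le> card (Y \<union> swp Y)" by (rule card_mono) (use fY finite_swp sub2 in auto)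
  also have "\<dots> \<le> 2 * card Y" by (rule card_Un_swp_le)
  finally have "2 * r * a1 \<le> 2 * card Y" using cZ by simp
  then have "real r * real a1 \<le> real (card Y)" by (metis of_nat_le_iff of_nat_mult mult_le_cancel1 mult.assoc zero_less_numeral)
  then have "real r * real a1 \<le> real r * (real b1 + Ob)" using cY by (simp add: algebra_simps)
  then have F2: "real a1 \<le> real b1 + Ob" using r1 by (simp add: mult_le_cancel_left)
  have ab: "real a1 * real b1 \<ge> real a1 * (real a1 - Ob)"
  proof (cases "real a1 \<ge> Ob")
    case True then show ?thesis using F2 by (intro mult_left_mono) auto
  next
    case False then have "real a1 * (real a1 - Ob) \<le> 0" by (simp add: mult_nonneg_nonpos)
    then show ?thesis by (smt (verit) of_nat_0_le_iff zero_le_mult_iff)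
  qed
  have "real k * (real k - real a1) + 2 * (real a1 * (real a1 - Ob) - real a1 * Ob) \<le> real k * (real k - real a1) + 2 * (real a1 * real b1 - real a1 * Ob)"
    using ab by simp
  also have "\<dots> \<le> 2 * (real k * Ob)" by (rule F1)
  finally have "real k * (real k - real a1) + 2 * (real a1 * (real a1 - Ob) - real a1 * Ob) \<le> 2 * (real k * Ob)" .
  then have q: "48 * real k ^ 2 - 78 * real k * real a1 + 116 * real a1 ^ 2 \<le> 0"
    unfolding Ob_def by (simp add: algebra_simps power2_eq_square)
  have "48 * real k ^ 2 - 78 * real k * real a1 + 116 * real a1 ^ 2 = 39 * (real k - real a1)^2 + 9 * real k ^ 2 + 77 * real a1 ^ 2"
    by (simp add: algebra_simps power2_eq_square)
  moreover have "real k ^ 2 > 0" using k2 by simp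
  ultimately show False using q by (smt (verit) zero_le_power2)
qed

end

lemma card_pairs_fiber:
  assumes "finite A" "finite B"
  shows "card {(x,y) \<in> A \<times> B. g x y} = (\<Sum>y\<in>B. card {x \<in> A. g x y})"
proof -
  have "{(x,y) \<in> A \<times> B. g x y} = swp (Sigma B (\<lambda>y. {x \<in> A. g x y}))"
    by (auto simp: swp_mem)
  then have "card {(x,y) \<in> A \<times> B. g x y} = card (Sigma B (\<lambda>y. {x \<in> A. g x y}))"
    using card_swp by metis
  also have "\<dots> = (\<Sum>y\<in>B. card {x \<in> A. g x y})" using assms by simp
  finally show ?thesis .
qed

context inst
begin

lemma ka_same: assumes "v \<in> V" "y \<in> ka v" shows "ka y = ka v"
  using ka_eq[OF ka_props(1)[OF assms(1)] assms(2)] .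

lemma card_ka_pos: "v \<in> V \<Longrightarrow> card (ka v) > 0"
  using ka_props[of v] AT_sub[of "ka v"] fin finite_subset by (auto simp: card_gt_0_iff)

lemma fin_ka: "v \<in> V \<Longrightarrow> finite (ka v)"
  using ka_props[of v] AT_sub[of "ka v"] fin finite_subset by auto

lemma wset_formula:
  assumes u: "u \<in> V" and SV: "S \<subseteq> V" and Sc: "\<And>v. v \<in> S \<Longrightarrow> ka v \<subseteq> S"
  shows "wset V E Cl u S = real (card {(x,y) \<in> ka u \<times> S. E' x y \<or> x = y}) / real (card (ka u))"
proof -
  define K where "K = ka u"
  define c where "c = (\<lambda>y. card {x \<in> K. E' x y \<or> x = y})"
  define h where "h = (\<lambda>y. real (c y) / (real (card K) * real (card (ka y))))"
  have fK: "finite K" unfolding K_def using fin_ka[OF u] .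
  have fS: "finite S" using SV fin finite_subset by blast
  have wt_eq: "wt V E Cl u v = (\<Sum>y\<in>ka v. h y)" if v: "v \<in> S" for v
  proof -
    have vV: "v \<in> V" using v SV by auto
    have "card {(x,y) \<in> K \<times> ka v. E' x y \<or> x = y} = (\<Sum>y\<in>ka v. c y)"
      unfolding c_def by (rule card_pairs_fiber[OF fK fin_ka[OF vV]])
    then have "wt V E Cl u v = (\<Sum>y\<in>ka v. real (c y)) / (real (card K) * real (card (ka v)))"
      unfolding wt_def Let_def K_def by simp
    also have "\<dots> = (\<Sum>y\<in>ka v. real (c y) / (real (card K) * real (card (ka v))))"
      by (simp add: sum_divide_distrib)
    also have "\<dots> = (\<Sum>y\<in>ka v. h y)"
      unfolding h_def by (rule sum.cong) (use ka_same[OF vV] in auto)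
    finally show ?thesis .
  qed
  have "wset V E Cl u S = (\<Sum>v\<in>S. \<Sum>y\<in>ka v. h y)"
    unfolding wset_def by (rule sum.cong) (use wt_eq in auto)
  also have "\<dots> = (\<Sum>v\<in>S. \<Sum>y\<in>{y. y \<in> S \<and> y \<in> ka v}. h y)"
  proof (rule sum.cong)
    fix v assume "v \<in> S"
    then have "ka v = {y. y \<in> S \<and> y \<in> ka v}" using Sc by auto
    then show "(\<Sum>y\<in>ka v. h y) = (\<Sum>y\<in>{y. y \<in> S \<and> y \<in> ka v}. h y)" by simp
  qed simp
  also have "\<dots> = (\<Sum>y\<in>S. \<Sum>v\<in>{v. v \<in> S \<and> y \<in> ka v}. h y)"
    by (rule sum.swap_restrict[OF fS fS])
  also have "\<dots> = (\<Sum>y\<in>S. real (c y) / real (card K))"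
  proof (rule sum.cong)
    fix y assume y: "y \<in> S"
    have yV: "y \<in> V" using y SV by auto
    have eq: "{v. v \<in> S \<and> y \<in> ka v} = ka y"
    proof
      show "{v. v \<in> S \<and> y \<in> ka v} \<subseteq> ka y"
      proof
        fix v assume "v \<in> {v. v \<in> S \<and> y \<in> ka v}"
        then have "v \<in> V" "y \<in> ka v" using SV by auto
        then show "v \<in> ka y" using ka_same ka_props by metis
      qed
    next
      show "ka y \<subseteq> {v. v \<in> S \<and> y \<in> ka v}"
      proof
        fix v assume v: "v \<in> ka y"
        have "v \<in> S" using v Sc[OF y] by auto
        moreover have "ka v = ka y" using ka_same[OF yV v] .
        ultimately show "v \<in> {v. v \<in> S \<and> y \<in> ka v}" using ka_props(2)[OF yV] by auto
      qed
    qed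
    have "(\<Sum>v\<in>{v. v \<in> S \<and> y \<in> ka v}. h y) = real (card (ka y)) * h y" unfolding eq by simp
    also have "\<dots> = real (c y) / real (card K)" unfolding h_def using card_ka_pos[OF yV] by simp
    finally show "(\<Sum>v\<in>{v. v \<in> S \<and> y \<in> ka v}. h y) = real (c y) / real (card K)" .
  qed simp
  also have "\<dots> = real (\<Sum>y\<in>S. c y) / real (card K)" by (simp add: sum_divide_distrib)
  also have "(\<Sum>y\<in>S. c y) = card {(x,y) \<in> K \<times> S. E' x y \<or> x = y}"
    unfolding c_def by (rule card_pairs_fiber[OF fK fS, symmetric])
  finally show ?thesis unfolding K_def .
qed

end

lemma arith_key:
  fixes e p n q k :: real
  assumes e: "0 < e" "e < 1/100" and k: "k \<ge> 1" and pnq: "p \<ge> 0" "n \<ge> 0" "q \<ge> 0"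
    and V1: "k^2 + p - n \<le> 2*e*(k^2 + p + q)"
  shows "(2*p - 2*n) + 12*e*(p - 2*n - q) < 0"
proof -
  have k2: "k^2 > 0" using k by simp
  have h1: "(1 - 2*e) * k^2 > 0" using e k2 by simp
  have V1': "p - n \<le> 2*e*(p+q) - (1 - 2*e) * k^2" using V1 by (simp add: algebra_simps)
  have h2: "p - n < 2*e*(p+q)" using V1' h1 by linarith
  have h3: "2*e*(p+q) \<le> (p+q)/50"
  proof -
    have "2*e \<le> 1/50" using e by simp
    then have "2*e*(p+q) \<le> (1/50)*(p+q)" using pnq by (intro mult_right_mono) auto
    then show ?thesis by simp
  qed
  have h4': "p - n < (p+q)/50" using less_le_trans[OF h2 h3] .
  have h4'': "50*(p - n) < p+q" using h4' by (simp add: field_simps)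
  have h4: "49*p < 50*n + q" using h4'' by (simp add: algebra_simps)
  have h5: "(2+12*e)*(p-n) < (2+12*e)*(2*e*(p+q))"
    using h2 e by (intro mult_strict_left_mono) auto
  have h6: "(4+24*e)*(p+q) \<le> 12*(n+q)"
  proof -
    have "(4+24*e)*(p+q) \<le> 5*(p+q)" using e pnq by (intro mult_right_mono) auto
    moreover have "5*(p+q) \<le> 12*(n+q)" using h4 pnq by (smt (verit))
    ultimately show ?thesis by (rule order_trans)
  qed
  have h7: "(2+12*e)*(2*e*(p+q)) = e*((4+24*e)*(p+q))" by (simp add: algebra_simps)
  have h8: "e*((4+24*e)*(p+q)) \<le> e*(12*(n+q))" using h6 e by (intro mult_left_mono) auto
  have "(2*p - 2*n) + 12*e*(p - 2*n - q) = (2+12*e)*(p-n) - e*(12*(n+q))" by (simp add: algebra_simps)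
  then show ?thesis using h5 h7 h8 by linarith
qed

context inst
begin

definition UPn :: "'a set set \<Rightarrow> ('a \<times> 'a) set" where
  "UPn P = {z \<in> OBp P. \<exists>w\<in>V. same_cluster P (fst z) w \<and> w \<notin> ka (fst z)}"

definition Phi :: "real \<Rightarrow> 'a set set \<Rightarrow> real" where
  "Phi e P = real (card (OBp P)) + 12 * e * real (card (UPn P))"

definition AR :: "'a set set set" where
  "AR = {P. partition_on V P \<and> (\<forall>K\<in>AT. \<exists>C\<in>P. K \<subseteq> C)}"

lemma AR_fin: "finite AR"
  by (rule finite_subset[OF _ finitely_many_partition_on[OF fin]]) (auto simp: AR_def)

lemma finUP: "finite (UPn P)" unfolding UPn_def using finOB by auto

lemma UP_sub: "UPn P \<subseteq> OBp P" unfolding UPn_def by auto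

lemma Pstar: "\<exists>P\<in>AR. cc_cost V E' P = cc_opt V E'"
proof -
  obtain P where P: "partition_on V P" "cc_cost V E' P = cc_opt V E'"
    "\<And>Q. partition_on V Q \<Longrightarrow> cc_cost V E' P \<le> cc_cost V E' Q" using opt_exists by blast
  have "card (OBp P) \<le> card (OBp Q)" if "partition_on V Q" for Q
    using P(3)[OF that] cost2[of P] cost2[of Q] by linarith
  then have "\<forall>K\<in>AT. \<exists>D\<in>P. K \<subseteq> D" using no_split[OF P(1)] by blast
  then show ?thesis using P unfolding AR_def by blast
qed

lemma move_improves:
  assumes e: "0 < e" "e < 1/100" and PA: "P \<in> AR" and u: "u \<in> V" and C: "C \<in> P"
    and KC: "ka u \<subset> C"
    and viol: "wset V E Cl u C \<le> real (card C) / 2 + e * wset V E Cl u V"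
  shows "iso P (ka u) \<in> AR \<and> Phi e (iso P (ka u)) < Phi e P"
proof -
  define K where "K = ka u"
  have P: "partition_on V P" and Pat: "\<And>K'. K' \<in> AT \<Longrightarrow> \<exists>D\<in>P. K' \<subseteq> D" using PA unfolding AR_def by auto
  have KA: "K \<in> AT" "u \<in> K" unfolding K_def using ka_props[OF u] by auto
  have KV: "K \<subseteq> V" using AT_sub[OF KA(1)] .
  have UP: "\<Union>P = V" using partition_onD1[OF P] by simp
  have CV: "C \<subseteq> V" using C UP by auto
  have fC: "finite C" using CV fin finite_subset by blast
  have fK: "finite K" using KV fin finite_subset by blast
  have KsC: "K \<subseteq> C" "K \<noteq> C" using KC unfolding K_def by auto
  define R where "R = C - K"
  define W where "W = V - C"
  have Rne: "R \<noteq> {}" using KsC unfolding R_def by auto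
  have fR: "finite R" "finite W" using fC fin unfolding R_def W_def by auto
  have kaK: "ka a = K" if "a \<in> K" for a using ka_eq[OF KA(1) that] .
  have notin_ka: "x \<notin> ka y" if "x \<in> K" "y \<in> V" "y \<notin> K" for x y
  proof
    assume "x \<in> ka y"
    then have "ka x = ka y" using ka_same[OF that(2)] by simp
    then show False using kaK[OF that(1)] ka_props(2)[OF that(2)] that(3) by simp
  qed
  have scC: "same_cluster P a b \<longleftrightarrow> b \<in> C" if "a \<in> C" for a b using sc_iff[OF P C that] .
  have scC': "same_cluster P b a \<longleftrightarrow> b \<in> C" if "a \<in> C" for a b
    using sc_iff[OF P C that] same_cluster_sym by metis
  have Cunion: "ka v \<subseteq> C" if v: "v \<in> C" for v
  proof -
    have vV: "v \<in> V" using v CV by auto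
    obtain D where D: "D \<in> P" "ka v \<subseteq> D" using Pat[OF ka_props(1)[OF vV]] by blast
    have "v \<in> D" using D ka_props(2)[OF vV] by auto
    then have "D = C" using partition_onD2[OF P] D(1) C v unfolding disjoint_def pairwise_def disjnt_def by blast
    then show ?thesis using D by simp
  qed
  define g where "g = (\<lambda>x y. E' x y \<or> x = y)"
  define Xp where "Xp = {(x,y) \<in> K \<times> R. E' x y}"
  define Xn where "Xn = {(x,y) \<in> K \<times> R. \<not> E' x y}"
  define Xq where "Xq = {(x,y) \<in> K \<times> W. E' x y}"
  define k where "k = card K"
  define p where "p = card Xp"
  define n where "n = card Xn"
  define q where "q = card Xq"
  define \<rho> where "\<rho> = card R"
  have fX: "finite Xp" "finite Xn" "finite Xq" unfolding Xp_def Xn_def Xq_def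
    by (rule finite_subset[of _ "K \<times> R"], force, use fK fR in simp)+
       (rule finite_subset[of _ "K \<times> W"], force, use fK fR in simp)
  have k1: "k \<ge> 1" unfolding k_def using fK KA(2) by (metis card_0_eq empty_iff less_one not_le)
  have pn: "p + n = k * \<rho>"
  proof -
    have "K \<times> R = Xp \<union> Xn" "Xp \<inter> Xn = {}" unfolding Xp_def Xn_def by auto
    then have "card (K \<times> R) = p + n" unfolding p_def n_def using fX card_Un_disjoint by metis
    then show ?thesis unfolding k_def \<rho>_def by (simp add: card_cartesian_product)
  qed
  have cardC: "card C = k + \<rho>"
  proof -
    have "C = K \<union> R" "K \<inter> R = {}" using KsC unfolding R_def by auto
    then show ?thesis unfolding k_def \<rho>_def using fK fR card_Un_disjoint by metis
  qed
  have gK: "g x y" if "x \<in> K" "y \<in> K" for x y using E'_in[OF KA(1) that] unfolding g_def by simp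
  have wC: "wset V E Cl u C = (real k ^ 2 + real p) / real k"
  proof -
    have "{(x,y) \<in> ka u \<times> C. E' x y \<or> x = y} = (K \<times> K) \<union> Xp"
      using gK KsC unfolding K_def[symmetric] Xp_def R_def g_def by auto
    moreover have "(K \<times> K) \<inter> Xp = {}" unfolding Xp_def R_def by auto
    ultimately have "card {(x,y) \<in> ka u \<times> C. E' x y \<or> x = y} = k * k + p"
      unfolding k_def p_def using fK fX card_Un_disjoint[of "K \<times> K" Xp] by (simp add: card_cartesian_product)
    then show ?thesis using wset_formula[OF u CV Cunion] unfolding K_def[symmetric] k_def
      by (simp add: power2_eq_square)
  qed
  have wV: "wset V E Cl u V = (real k ^ 2 + real p + real q) / real k"
  proof -
    have Sc: "ka v \<subseteq> V" if "v \<in> V" for v using AT_sub[OF ka_props(1)[OF that]] .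
    have "{(x,y) \<in> ka u \<times> V. E' x y \<or> x = y} = (K \<times> K) \<union> Xp \<union> Xq"
      using gK KsC KV CV unfolding K_def[symmetric] Xp_def Xq_def R_def W_def g_def by auto
    moreover have "(K \<times> K) \<inter> Xp = {}" "(K \<times> K \<union> Xp) \<inter> Xq = {}" using KsC unfolding Xp_def Xq_def R_def W_def by auto
    ultimately have "card {(x,y) \<in> ka u \<times> V. E' x y \<or> x = y} = k * k + p + q"
      unfolding k_def p_def q_def using fK fX card_Un_disjoint[of "K \<times> K" Xp] card_Un_disjoint[of "K \<times> K \<union> Xp" Xq]
      by (simp add: card_cartesian_product)
    then show ?thesis using wset_formula[OF u _ Sc] unfolding K_def[symmetric] k_def
      by (simp add: power2_eq_square)
  qed
  have kpos: "real k > 0" using k1 by simp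
  have V1: "real k ^ 2 + real p - real n \<le> 2 * e * (real k ^ 2 + real p + real q)"
  proof -
    have "2 * real k * wset V E Cl u C \<le> 2 * real k * (real (card C) / 2 + e * wset V E Cl u V)"
      using viol kpos by (intro mult_left_mono) auto
    also have "\<dots> = real k * real (card C) + 2 * e * (real k * wset V E Cl u V)" by (simp add: algebra_simps)
    also have "real k * wset V E Cl u V = real k ^ 2 + real p + real q" unfolding wV using kpos by simp
    finally have a: "2 * (real k * wset V E Cl u C) \<le> real k * real (card C) + 2 * e * (real k ^ 2 + real p + real q)"
      by (simp add: algebra_simps)
    have b: "real k * wset V E Cl u C = real k ^ 2 + real p" unfolding wC using kpos by simp
    have c: "real k * real (card C) = real k ^ 2 + real p + real n"
      unfolding cardC using pn by (simp add: algebra_simps power2_eq_square) (metis of_nat_add of_nat_mult)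
    show ?thesis using a b c by linarith
  qed
  define Q where "Q = iso P K"
  have Qp: "partition_on V Q" unfolding Q_def using iso_partition[OF P KV] KA(2) by auto
  have QA: "Q \<in> AR"
  proof -
    have "\<exists>D\<in>Q. K' \<subseteq> D" if K': "K' \<in> AT" for K'
    proof (cases "K' = K")
      case True then show ?thesis unfolding Q_def iso_def by auto
    next
      case False
      obtain D where D: "D \<in> P" "K' \<subseteq> D" using Pat[OF K'] by blast
      have "K' \<inter> K = {}" using AT_disj[OF K' KA(1)] False by blast
      then have "K' \<subseteq> D - K" "D - K \<noteq> {}" using D AT_ne[OF K'] by auto
      then show ?thesis unfolding Q_def iso_def using D(1) by blast
    qed
    then show ?thesis using Qp unfolding AR_def by blast
  qed
  have scQ: "same_cluster Q a b \<longleftrightarrow> (a \<in> K \<and> b \<in> K) \<or> (a \<notin> K \<and> b \<notin> K \<and> same_cluster P a b)" for a b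
    unfolding Q_def by (rule iso_same)
  have s1: "OBp Q - OBp P \<subseteq> Xp \<union> swp Xp"
  proof
    fix z assume z: "z \<in> OBp Q - OBp P"
    obtain a b where ab: "z = (a,b)" by (cases z)
    have "(a \<in> K \<and> b \<in> R \<and> E' a b) \<or> (b \<in> K \<and> a \<in> R \<and> E' a b)"
    proof -
      have "same_cluster Q a b \<noteq> same_cluster P a b" using z unfolding ab OB_def by auto
      then have "(a \<in> K \<and> b \<notin> K \<and> same_cluster P a b) \<or> (b \<in> K \<and> a \<notin> K \<and> same_cluster P a b)"
        using scQ[of a b] KsC scC by auto
      moreover have "\<not> same_cluster Q a b" using calculation scQ[of a b] by auto
      ultimately show ?thesis using z KsC scC scC' unfolding ab OB_def R_def by auto
    qed
    then show "z \<in> Xp \<union> swp Xp" unfolding ab Xp_def using E'_sym by (auto simp: swp_mem)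
  qed
  have s2: "Xn \<union> swp Xn \<subseteq> OBp P - OBp Q"
  proof
    fix z assume z: "z \<in> Xn \<union> swp Xn"
    obtain a b where ab: "z = (a,b)" by (cases z)
    have "(a \<in> K \<and> b \<in> R \<and> \<not> E' a b) \<or> (b \<in> K \<and> a \<in> R \<and> \<not> E' a b)"
      using z E'_sym unfolding ab Xn_def by (auto simp: swp_mem)
    then show "z \<in> OBp P - OBp Q" unfolding ab OB_def using scQ[of a b] KsC scC CV KV unfolding R_def by auto
  qed
  have dXn: "Xn \<inter> swp Xn = {}" unfolding Xn_def R_def by (auto simp: swp_mem)
  have cXn: "card (Xn \<union> swp Xn) = 2 * n" unfolding n_def
    using card_Un_disjoint[OF fX(2) finite_swp[OF fX(2)] dXn] card_swp[of Xn] by simp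
  have cOB: "real (card (OBp Q)) - real (card (OBp P)) \<le> 2 * real p - 2 * real n"
  proof -
    have "card (OBp Q - OBp P) \<le> card (Xp \<union> swp Xp)" by (rule card_mono) (use s1 fX finite_swp in auto)
    also have "\<dots> \<le> 2 * p" unfolding p_def by (rule card_Un_swp_le)
    finally have a: "card (OBp Q - OBp P) \<le> 2 * p" .
    have b: "2 * n \<le> card (OBp P - OBp Q)" unfolding cXn[symmetric] by (rule card_mono) (use s2 finOB in auto)
    have "int (card (OBp Q)) - int (card (OBp P)) \<le> 2 * int p - 2 * int n"
      using card_diff_le[OF finOB[of Q] finOB[of P]] a b by linarith
    then show ?thesis by linarith
  qed
  have t1: "UPn Q \<subseteq> (UPn P - (Xn \<union> swp Xn \<union> Xq)) \<union> swp Xp"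
  proof
    fix z assume z: "z \<in> UPn Q"
    obtain a b where ab: "z = (a,b)" by (cases z)
    have zOB: "(a,b) \<in> OBp Q" using z unfolding ab UPn_def by auto
    obtain w where w: "w \<in> V" "same_cluster Q a w" "w \<notin> ka a" using z unfolding ab UPn_def by auto
    have aK: "a \<notin> K"
    proof
      assume "a \<in> K" then have "w \<in> K" using w scQ by auto
      then show False using w kaK \<open>a \<in> K\<close> by auto
    qed
    have wP: "same_cluster P a w" using w aK scQ by auto
    show "z \<in> (UPn P - (Xn \<union> swp Xn \<union> Xq)) \<union> swp Xp"
    proof (cases "b \<in> K \<and> a \<in> R")
      case True
      then have "\<not> same_cluster Q a b" using scQ aK by auto
      then have "E' a b" using zOB unfolding OB_def by auto
      then have "(b, a) \<in> Xp" using True E'_sym unfolding Xp_def by auto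
      then show ?thesis unfolding ab by (auto simp: swp_mem)
    next
      case False
      have same: "same_cluster Q a b \<longleftrightarrow> same_cluster P a b"
      proof (cases "b \<in> K")
        case True
        then have "a \<notin> C" using False aK unfolding R_def by auto
        then have "\<not> same_cluster P a b" using scC'[of b a] True KsC by auto
        then show ?thesis using scQ aK by auto
      next
        case False then show ?thesis using scQ aK by auto
      qed
      have "(a,b) \<in> OBp P" using zOB same unfolding OB_def by auto
      then have "z \<in> UPn P" unfolding ab UPn_def using w wP by auto
      moreover have "z \<notin> Xn \<union> swp Xn \<union> Xq" using aK False unfolding ab Xn_def Xq_def by (auto simp: swp_mem)
      ultimately show ?thesis by auto
    qed
  qed
  have t2: "Xn \<union> swp Xn \<union> Xq \<subseteq> UPn P"
  proof
    fix z assume z: "z \<in> Xn \<union> swp Xn \<union> Xq"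
    obtain a b where ab: "z = (a,b)" by (cases z)
    obtain r0 where r0: "r0 \<in> R" using Rne by auto
    have r0V: "r0 \<in> V" "r0 \<notin> K" "r0 \<in> C" using r0 CV unfolding R_def by auto
    consider (n1) "a \<in> K" "b \<in> R" "\<not> E' a b" | (n2) "b \<in> K" "a \<in> R" "\<not> E' a b" | (q1) "a \<in> K" "b \<in> W" "E' a b"
      using z E'_sym unfolding ab Xn_def Xq_def by (auto simp: swp_mem)
    then show "z \<in> UPn P"
    proof cases
      case n1
      have "(a,b) \<in> OBp P" using n1 scC KsC CV KV unfolding OB_def R_def by auto
      moreover have "same_cluster P a r0" "r0 \<notin> ka a" using n1 scC KsC r0V kaK by auto
      ultimately show ?thesis unfolding ab UPn_def using r0V by auto
    next
      case n2
      have aV: "a \<in> V" using n2 CV unfolding R_def by auto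
      have "(a,b) \<in> OBp P" using n2 scC KsC CV KV unfolding OB_def R_def by auto
      moreover have "same_cluster P a b" "b \<notin> ka a" using n2 scC KsC notin_ka[of b a] aV unfolding R_def by auto
      ultimately show ?thesis unfolding ab UPn_def using KV n2 by auto
    next
      case q1
      have "\<not> same_cluster P a b" using q1 scC KsC unfolding W_def by auto
      then have "(a,b) \<in> OBp P" using q1 KV KsC unfolding OB_def W_def by auto
      moreover have "same_cluster P a r0" "r0 \<notin> ka a" using q1 scC KsC r0V kaK by auto
      ultimately show ?thesis unfolding ab UPn_def using r0V by auto
    qed
  qed
  have dq: "(Xn \<union> swp Xn) \<inter> Xq = {}" unfolding Xn_def Xq_def R_def W_def using KV by (auto simp: swp_mem)
  have cU: "card (Xn \<union> swp Xn \<union> Xq) = 2 * n + q"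
    using card_Un_disjoint[OF _ fX(3) dq] cXn fX finite_swp unfolding q_def by auto
  have cPen: "real (card (UPn Q)) \<le> real (card (UPn P)) - (2 * real n + real q) + real p"
  proof -
    have "card (UPn Q) \<le> card ((UPn P - (Xn \<union> swp Xn \<union> Xq)) \<union> swp Xp)"
      by (rule card_mono) (use t1 finUP fX finite_swp in auto)
    also have "\<dots> \<le> card (UPn P - (Xn \<union> swp Xn \<union> Xq)) + card (swp Xp)" by (rule card_Un_le)
    also have "card (UPn P - (Xn \<union> swp Xn \<union> Xq)) = card (UPn P) - (2 * n + q)"
      using card_Diff_subset[of "Xn \<union> swp Xn \<union> Xq" "UPn P"] t2 fX finite_swp cU by auto
    finally have a: "card (UPn Q) \<le> card (UPn P) - (2 * n + q) + p" using card_swp[of Xp] unfolding p_def by simp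
    have b: "2 * n + q \<le> card (UPn P)" unfolding cU[symmetric] by (rule card_mono) (use t2 finUP in auto)
    show ?thesis using a b by (simp add: of_nat_diff)
  qed
  have key: "(2 * real p - 2 * real n) + 12 * e * (real p - 2 * real n - real q) < 0"
    by (rule arith_key[OF e _ _ _ _ V1]) (use k1 in auto)
  have "Phi e Q - Phi e P = (real (card (OBp Q)) - real (card (OBp P))) + 12 * e * (real (card (UPn Q)) - real (card (UPn P)))"
    unfolding Phi_def by (simp add: algebra_simps)
  also have "\<dots> \<le> (2 * real p - 2 * real n) + 12 * e * (real p - 2 * real n - real q)"
  proof (rule add_mono[OF cOB])
    show "12 * e * (real (card (UPn Q)) - real (card (UPn P))) \<le> 12 * e * (real p - 2 * real n - real q)"
      using cPen e by (intro mult_left_mono) auto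
  qed
  finally have "Phi e Q < Phi e P" using key by linarith
  then show ?thesis using QA unfolding Q_def K_def by simp
qed

end

context inst
begin

lemma main:
  assumes e: "0 < e" "e < 1/100"
  shows "\<exists>C1. partition_on V C1 \<and>
            real (cc_cost V E' C1) \<le> (1 + 12 * e) * real (cc_opt V E') \<and>
            (\<forall>K \<in> AT. \<exists>C \<in> C1. K \<subseteq> C) \<and>
            (\<forall>u \<in> V. \<forall>C \<in> C1. ka u \<subset> C \<longrightarrow>
               wset V E Cl u C > real (card C) / 2 + e * wset V E Cl u V)"
proof -
  obtain Ps where Ps: "Ps \<in> AR" "cc_cost V E' Ps = cc_opt V E'" using Pstar by blast
  have ne: "Phi e ` AR \<noteq> {}" using Ps by auto
  have fi: "finite (Phi e ` AR)" using AR_fin by simp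
  have "Min (Phi e ` AR) \<in> Phi e ` AR" using Min_in[OF fi ne] .
  then obtain Pm where Pm: "Pm \<in> AR" "Phi e Pm = Min (Phi e ` AR)" by auto
  have Pmin: "Phi e Pm \<le> Phi e P" if "P \<in> AR" for P using Pm(2) Min_le[OF fi] that by simp
  have cost: "real (cc_cost V E' Pm) \<le> (1 + 12 * e) * real (cc_opt V E')"
  proof -
    have a: "real (card (OBp Pm)) \<le> Phi e Pm" unfolding Phi_def using e by simp
    have "card (UPn Ps) \<le> card (OBp Ps)" by (rule card_mono[OF finOB UP_sub])
    then have "12 * e * real (card (UPn Ps)) \<le> 12 * e * real (card (OBp Ps))" using e by (intro mult_left_mono) auto
    then have b: "Phi e Ps \<le> (1 + 12 * e) * real (card (OBp Ps))" unfolding Phi_def by (simp add: algebra_simps)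
    have "real (card (OBp Pm)) \<le> (1 + 12 * e) * real (card (OBp Ps))" using a b Pmin[OF Ps(1)] by linarith
    moreover have "real (card (OBp Pm)) = 2 * real (cc_cost V E' Pm)" using cost2[of Pm] by (metis of_nat_mult of_nat_numeral)
    moreover have "real (card (OBp Ps)) = 2 * real (cc_opt V E')" using cost2[of Ps] Ps(2) by (metis of_nat_mult of_nat_numeral)
    ultimately show ?thesis by (simp add: algebra_simps)
  qed
  have cond: "wset V E Cl u C > real (card C) / 2 + e * wset V E Cl u V"
    if u: "u \<in> V" and C: "C \<in> Pm" and KC: "ka u \<subset> C" for u C
  proof (rule ccontr)
    assume "\<not> ?thesis"
    then have "wset V E Cl u C \<le> real (card C) / 2 + e * wset V E Cl u V" by simp
    from move_improves[OF e Pm(1) u C KC this]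
    have "iso Pm (ka u) \<in> AR" "Phi e (iso Pm (ka u)) < Phi e Pm" by auto
    then show False using Pmin by fastforce
  qed
  show ?thesis using Pm(1) cost cond unfolding AR_def by blast
qed

end

theorem lemma9:
  "\<exists>c::real. c > 0 \<and> (\<exists>\<epsilon>0::real. \<epsilon>0 > 0 \<and>
    (\<forall>\<epsilon>::real. 0 < \<epsilon> \<and> \<epsilon> < \<epsilon>0 \<longrightarrow>
      (\<forall>(V :: nat set) (E :: nat \<Rightarrow> nat \<Rightarrow> bool) (Cl :: nat set set).
         finite V \<and> (\<forall>u v. E u v \<longleftrightarrow> E v u) \<and>
         partition_on V Cl \<and> cc_cost V E Cl \<le> 3 * cc_opt V E \<longrightarrow>
         (\<exists>C1. partition_on V C1 \<and>
            real (cc_cost V (mod_E V E Cl) C1) \<le> (1 + c * \<epsilon>) * real (cc_opt V (mod_E V E Cl)) \<and>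
            (\<forall>K \<in> atoms V E Cl. \<exists>C \<in> C1. K \<subseteq> C) \<and>
            (\<forall>u \<in> V. \<forall>C \<in> C1. atom_of V E Cl u \<subset> C \<longrightarrow>
               wset V E Cl u C > real (card C) / 2 + \<epsilon> * wset V E Cl u V)))))"
proof (rule exI[of _ "12::real"], rule conjI)
  show "(12::real) > 0" by simp
  show "\<exists>\<epsilon>0::real. \<epsilon>0 > 0 \<and>
    (\<forall>\<epsilon>::real. 0 < \<epsilon> \<and> \<epsilon> < \<epsilon>0 \<longrightarrow>
      (\<forall>(V :: nat set) (E :: nat \<Rightarrow> nat \<Rightarrow> bool) (Cl :: nat set set).
         finite V \<and> (\<forall>u v. E u v \<longleftrightarrow> E v u) \<and>
         partition_on V Cl \<and> cc_cost V E Cl \<le> 3 * cc_opt V E \<longrightarrow>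
         (\<exists>C1. partition_on V C1 \<and>
            real (cc_cost V (mod_E V E Cl) C1) \<le> (1 + 12 * \<epsilon>) * real (cc_opt V (mod_E V E Cl)) \<and>
            (\<forall>K \<in> atoms V E Cl. \<exists>C \<in> C1. K \<subseteq> C) \<and>
            (\<forall>u \<in> V. \<forall>C \<in> C1. atom_of V E Cl u \<subset> C \<longrightarrow>
               wset V E Cl u C > real (card C) / 2 + \<epsilon> * wset V E Cl u V))))"
  proof (rule exI[of _ "1/100::real"], rule conjI)
    show "(1/100::real) > 0" by simp
  next
    show "\<forall>\<epsilon>::real. 0 < \<epsilon> \<and> \<epsilon> < 1/100 \<longrightarrow>
      (\<forall>(V :: nat set) (E :: nat \<Rightarrow> nat \<Rightarrow> bool) (Cl :: nat set set).
         finite V \<and> (\<forall>u v. E u v \<longleftrightarrow> E v u) \<and>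
         partition_on V Cl \<and> cc_cost V E Cl \<le> 3 * cc_opt V E \<longrightarrow>
         (\<exists>C1. partition_on V C1 \<and>
            real (cc_cost V (mod_E V E Cl) C1) \<le> (1 + 12 * \<epsilon>) * real (cc_opt V (mod_E V E Cl)) \<and>
            (\<forall>K \<in> atoms V E Cl. \<exists>C \<in> C1. K \<subseteq> C) \<and>
            (\<forall>u \<in> V. \<forall>C \<in> C1. atom_of V E Cl u \<subset> C \<longrightarrow>
               wset V E Cl u C > real (card C) / 2 + \<epsilon> * wset V E Cl u V)))"
    proof (intro allI impI)
    fix \<epsilon> :: real and V :: "nat set" and E :: "nat \<Rightarrow> nat \<Rightarrow> bool" and Cl :: "nat set set"
    assume e: "0 < \<epsilon> \<and> \<epsilon> < 1/100"
    assume h: "finite V \<and> (\<forall>u v. E u v \<longleftrightarrow> E v u) \<and> partition_on V Cl \<and> cc_cost V E Cl \<le> 3 * cc_opt V E"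
    interpret I: inst V E Cl using h by unfold_locales auto
    show "\<exists>C1. partition_on V C1 \<and>
            real (cc_cost V (mod_E V E Cl) C1) \<le> (1 + 12 * \<epsilon>) * real (cc_opt V (mod_E V E Cl)) \<and>
            (\<forall>K \<in> atoms V E Cl. \<exists>C \<in> C1. K \<subseteq> C) \<and>
            (\<forall>u \<in> V. \<forall>C \<in> C1. atom_of V E Cl u \<subset> C \<longrightarrow>
               wset V E Cl u C > real (card C) / 2 + \<epsilon> * wset V E Cl u V)"
      using I.main e by blast
    qed
  qed
qed

end
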